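(* Let $\Gamma=(\mathcal{M},K)$ be a $d$-dimensional grid and let $\sigma$ be an outmap on $\Gamma$ with $\sigma(p)\cap p=\emptyset$ for every vertex $p$. Let $\Gamma'$ and $\Gamma''$ be two nonempty induced subgrids of $\Gamma$ with disjoint vertex sets, such that the union of their vertex sets is the vertex set of a nonempty induced subgrid $\Gamma'\cup\Gamma''$ of $\Gamma$. Let $x$ be the unique sink of $\Gamma'$ and $y$ the unique sink of $\Gamma''$ (with respect to the restricted outmaps). Then either (a) one of $x$, $y$ is the unique sink of $\Gamma'\cup\Gamma''$, or (b) $\sigma$ is not a unique sink orientation of $\Gamma$, and $\Gamma$ with $\sigma$ admits a violation of type (GUV1) or (GUV2) defined below.
   Context: Grid: let $n,d$ be positive integers, $\mathcal{M}=\{1,\dots,n\}$ (the directions), and $K=(\kappa_1,\dots,\kappa_d)$ a partition of $\mathcal{M}$ into ordered sets with $|\kappa_i|\ge 2$. The grid $\Gamma=(\mathcal{M},K)$ is the undirected graph with vertex set $V=\{p\subseteq\mathcal{M} : |p\cap\kappa_i|=1 \text{ for } i=1,\dots,d\}$ and edge set $\{\{p,q\}: p,q\in V,\ |p\oplus q|=2\}$ ($\oplus$ = symmetric difference). An outmap is a function $\sigma:V\to\mathcal{P}(\mathcal{M})$; $\sigma(p)$ is the set of directions in which $p$ has outgoing edges (edges of $p$ in other directions are incoming). A nonempty induced subgrid is given by $\mathcal{M}'\subseteq\mathcal{M}$ with $\mathcal{M}'\cap\kappa_i\neq\emptyset$ for all $i$; its vertices are $V'=\{p\subseteq\mathcal{M}':|p\cap\kappa_i|=1\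 \forall i\}$, its edges are those of $\Gamma$ between vertices of $V'$, and its restricted outmap is $\sigma'(p)=\sigma(p)\cap\mathcal{M}'$. A sink of a subgrid is a vertex $p$ with $\sigma'(p)=\emptyset$. $\sigma$ is a unique sink orientation (USO) if every nonempty induced subgrid has a unique sink. The refined index of an outmap $\sigma'$ on subgrid $(\mathcal{M}',K')$ is $r_{\sigma'}(p)=(|\sigma'(p)\cap\kappa'_1|,\dots,|\sigma'(p)\cap\kappa'_d|)$. Violations: (GUV1) a vertex $p$ with $p\cap\sigma(p)\neq\emptyset$; (GUV2) an induced subgrid $(\mathcal{M}',K')$ with restricted outmap $\sigma'$ and two distinct vertices $p\neq q$ of it with $r_{\sigma'}(p)=r_{\sigma'}(q)$. *)

theory Defs
  imports Main
begin

text \<open>Directions are \<open>{1..n}\<close>; the partition K = (kappa_1,...,kappa_d) is a list of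
  sets of directions (the order within each kappa_i plays no role here).\<close>

definition is_grid :: "nat \<Rightarrow> nat \<Rightarrow> nat set list \<Rightarrow> bool" where
  "is_grid n d K \<longleftrightarrow> n \<ge> 1 \<and> d \<ge> 1 \<and> length K = d
     \<and> (\<forall>i<d. K ! i \<subseteq> {1..n} \<and> card (K ! i) \<ge> 2)
     \<and> (\<forall>i<d. \<forall>j<d. i \<noteq> j \<longrightarrow> K ! i \<inter> K ! j = {})
     \<and> \<Union> (set K) = {1..n}"

definition vertices :: "nat set list \<Rightarrow> nat set \<Rightarrow> nat set set" where
  "vertices K M' = {p. p \<subseteq> M' \<and> (\<forall>i<length K. card (p \<inter> K ! i) = 1)}"

definition is_subgrid :: "nat \<Rightarrow> nat set list \<Rightarrow> nat set \<Rightarrow> bool" where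
  "is_subgrid n K M' \<longleftrightarrow> M' \<subseteq> {1..n} \<and> (\<forall>i<length K. M' \<inter> K ! i \<noteq> {})"

definition is_outmap :: "nat \<Rightarrow> nat set list \<Rightarrow> (nat set \<Rightarrow> nat set) \<Rightarrow> bool" where
  "is_outmap n K \<sigma> \<longleftrightarrow> (\<forall>p\<in>vertices K {1..n}. \<sigma> p \<subseteq> {1..n})"

text \<open>Sink w.r.t. the restricted outmap \<open>\<sigma>' p = \<sigma> p \<inter> M'\<close>.\<close>
definition is_sink :: "nat set list \<Rightarrow> (nat set \<Rightarrow> nat set) \<Rightarrow> nat set \<Rightarrow> nat set \<Rightarrow> bool" where
  "is_sink K \<sigma> M' p \<longleftrightarrow> p \<in> vertices K M' \<and> \<sigma> p \<inter> M' = {}"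

definition is_unique_sink :: "nat set list \<Rightarrow> (nat set \<Rightarrow> nat set) \<Rightarrow> nat set \<Rightarrow> nat set \<Rightarrow> bool" where
  "is_unique_sink K \<sigma> M' p \<longleftrightarrow> is_sink K \<sigma> M' p \<and> (\<forall>q. is_sink K \<sigma> M' q \<longrightarrow> q = p)"

definition is_USO :: "nat \<Rightarrow> nat set list \<Rightarrow> (nat set \<Rightarrow> nat set) \<Rightarrow> bool" where
  "is_USO n K \<sigma> \<longleftrightarrow> (\<forall>M'. is_subgrid n K M' \<longrightarrow> (\<exists>!p. is_sink K \<sigma> M' p))"

text \<open>Refined index of the restricted outmap on subgrid (M', K') with kappa'_i = kappa_i \<inter> M'.\<close>
definition refined_index :: "nat set list \<Rightarrow> (nat set \<Rightarrow> nat set) \<Rightarrow> nat set \<Rightarrow> nat set \<Rightarrow> nat list" where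
  "refined_index K \<sigma> M' p = map (\<lambda>k. card ((\<sigma> p \<inter> M') \<inter> (k \<inter> M'))) K"

definition GUV1 :: "nat \<Rightarrow> nat set list \<Rightarrow> (nat set \<Rightarrow> nat set) \<Rightarrow> bool" where
  "GUV1 n K \<sigma> \<longleftrightarrow> (\<exists>p\<in>vertices K {1..n}. p \<inter> \<sigma> p \<noteq> {})"

definition GUV2 :: "nat \<Rightarrow> nat set list \<Rightarrow> (nat set \<Rightarrow> nat set) \<Rightarrow> bool" where
  "GUV2 n K \<sigma> \<longleftrightarrow> (\<exists>M'. is_subgrid n K M' \<and>
     (\<exists>p\<in>vertices K M'. \<exists>q\<in>vertices K M'. p \<noteq> q \<and> refined_index K \<sigma> M' p = refined_index K \<sigma> M' q))"

end

theory Submission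
  imports Defs "HOL-Library.FuncSet"
begin

lemma vert_of_choice:
  assumes disj: "\<forall>i<length K. \<forall>j<length K. i\<noteq>j \<longrightarrow> K!i \<inter> K!j = {}"
    and f: "\<forall>i<length K. f i \<in> M \<inter> K!i"
  shows "f ` {..<length K} \<in> vertices K M"
proof -
  have "f ` {..<length K} \<inter> K!i = {f i}" if "i < length K" for i
  proof
    show "f ` {..<length K} \<inter> K!i \<subseteq> {f i}"
    proof
      fix e assume "e \<in> f ` {..<length K} \<inter> K!i"
      then obtain j where j: "j < length K" "e = f j" "e \<in> K!i" by auto
      have "j = i"
      proof (rule ccontr)
        assume "j \<noteq> i"
        then have "K!j \<inter> K!i = {}" using disj j that by blast
        moreover have "f j \<in> K!j" using f j by blast
        ultimately show False using j by blast
      qed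
      then show "e \<in> {f i}" using j by simp
    qed
    show "{f i} \<subseteq> f ` {..<length K} \<inter> K!i" using f that by auto
  qed
  moreover have "f ` {..<length K} \<subseteq> M" using f by auto
  ultimately show ?thesis unfolding vertices_def by simp
qed

lemma vert_inj:
  assumes disj: "\<forall>i<length K. \<forall>j<length K. i\<noteq>j \<longrightarrow> K!i \<inter> K!j = {}"
  shows "inj_on (\<lambda>f. f ` {..<length K}) (PiE {..<length K} (\<lambda>i. M \<inter> K!i))"
proof (rule inj_onI)
  fix f g assume f: "f \<in> PiE {..<length K} (\<lambda>i. M \<inter> K!i)" and g: "g \<in> PiE {..<length K} (\<lambda>i. M \<inter> K!i)"
    and eq: "f ` {..<length K} = g ` {..<length K}"
  show "f = g"
  proof (rule PiE_ext[OF f g])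
    fix i assume i: "i \<in> {..<length K}"
    then have "f i \<in> g ` {..<length K}" using eq by blast
    then obtain j where j: "j < length K" "f i = g j" by auto
    have "f i \<in> K!i" using PiE_mem[OF f i] by blast
    have "g j \<in> K!j" using PiE_mem[OF g, of j] j(1) by blast
    have "i = j"
    proof (rule ccontr)
      assume "i \<noteq> j"
      then have "K!i \<inter> K!j = {}" using disj i j by simp
      then show False using \<open>f i \<in> K!i\<close> \<open>g j \<in> K!j\<close> j by auto
    qed
    then show "f i = g i" using j by simp
  qed
qed

lemma key:
  assumes len: "length K = d"
    and disj: "\<forall>i<length K. \<forall>j<length K. i\<noteq>j \<longrightarrow> K!i \<inter> K!j = {}"
    and un: "\<Union> (set K) = {1..n}"
    and sg: "is_subgrid n K M"
    and irr: "\<forall>p\<in>vertices K {1..n}. \<sigma> p \<inter> p = {}"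
    and inj: "inj_on (refined_index K \<sigma> M) (vertices K M)"
  shows "\<exists>z. is_unique_sink K \<sigma> M z"
proof -
  define I where "I = {..<length K}"
  define V where "V = vertices K M"
  define P where "P = PiE I (\<lambda>i. M \<inter> K!i)"
  define P' where "P' = PiE I (\<lambda>i. {..<card (M \<inter> K!i)})"
  define g where "g p = restrict (\<lambda>i. refined_index K \<sigma> M p ! i) I" for p
  have Msub: "M \<subseteq> {1..n}" using sg unfolding is_subgrid_def by auto
  have finM: "finite M" using Msub finite_subset by blast
  have ne: "\<And>i. i < length K \<Longrightarrow> M \<inter> K!i \<noteq> {}" using sg unfolding is_subgrid_def by auto
  have finV: "finite V" unfolding V_def vertices_def
    by (rule finite_subset[of _ "Pow M"]) (use finM in auto)
  have gi: "g p i = card (\<sigma> p \<inter> M \<inter> (K!i \<inter> M))" if "i < length K" for p i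
    using that unfolding g_def I_def refined_index_def by simp
  have ginj: "inj_on g V"
  proof (rule inj_onI)
    fix p q assume p: "p \<in> V" and q: "q \<in> V" and e: "g p = g q"
    have "refined_index K \<sigma> M p = refined_index K \<sigma> M q"
    proof (rule nth_equalityI)
      show "length (refined_index K \<sigma> M p) = length (refined_index K \<sigma> M q)"
        unfolding refined_index_def by simp
      fix i assume "i < length (refined_index K \<sigma> M p)"
      then have i: "i \<in> I" unfolding I_def refined_index_def by simp
      have "g p i = g q i" using e by simp
      then show "refined_index K \<sigma> M p ! i = refined_index K \<sigma> M q ! i"
        using i unfolding g_def by simp
    qed
    then show "p = q" using inj p q unfolding V_def by (meson inj_onD)
  qed
  have gP': "g ` V \<subseteq> P'"
  proof
    fix r assume "r \<in> g ` V"
    then obtain p where p: "p \<in> V" "r = g p" by auto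
    have pv: "p \<in> vertices K {1..n}" using p Msub unfolding V_def vertices_def by auto
    have "g p i < card (M \<inter> K!i)" if i: "i < length K" for i
    proof -
      have c1: "card (p \<inter> K!i) = 1" using p i unfolding V_def vertices_def by auto
      then obtain a where a: "p \<inter> K!i = {a}" using card_1_singletonE by blast
      have aM: "a \<in> M" using p a unfolding V_def vertices_def by auto
      have "\<sigma> p \<inter> M \<inter> (K!i \<inter> M) \<subseteq> (M \<inter> K!i) - {a}"
        using irr pv a by auto
      then have "card (\<sigma> p \<inter> M \<inter> (K!i \<inter> M)) \<le> card ((M \<inter> K!i) - {a})"
        using finM by (intro card_mono) auto
      also have "\<dots> < card (M \<inter> K!i)"
        using finM aM a by (intro card_Diff1_less) auto
      finally show ?thesis using gi i by simp
    qed
    then show "r \<in> P'" unfolding P'_def p(2) g_def I_def by auto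
  qed
  have finP': "finite P'" unfolding P'_def I_def by (intro finite_PiE) auto
  have "card P \<le> card V" unfolding P_def V_def I_def
  proof (rule card_inj_on_le[OF vert_inj[OF disj, of M]])
    show "(\<lambda>f. f ` {..<length K}) ` PiE {..<length K} (\<lambda>i. M \<inter> K!i) \<subseteq> vertices K M"
      by (auto intro!: vert_of_choice[OF disj])
  qed (use finV V_def in auto)
  moreover have "card P = card P'" unfolding P_def P'_def I_def
    by (simp add: card_PiE)
  ultimately have "card P' \<le> card (g ` V)" using card_image[OF ginj] by simp
  moreover have "card (g ` V) \<le> card P'" using card_mono[OF finP' gP'] .
  ultimately have gV: "g ` V = P'" using card_subset_eq[OF finP' gP'] by simp
  define z0 where "z0 = restrict (\<lambda>_. 0::nat) I"
  have "z0 \<in> P'" unfolding z0_def P'_def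
  proof (rule restrict_PiE_iff[THEN iffD2], intro ballI)
    fix i assume "i \<in> I"
    then have "M \<inter> K!i \<noteq> {}" using ne I_def by auto
    then have "card (M \<inter> K!i) > 0" using finM by (simp add: card_gt_0_iff)
    then show "0 \<in> {..<card (M \<inter> K!i)}" by simp
  qed
  then obtain p where p: "p \<in> V" "g p = z0" using gV by (metis imageE)
  have sinkchar: "\<sigma> q \<inter> M = {} \<longleftrightarrow> g q = z0" for q
  proof
    assume "\<sigma> q \<inter> M = {}"
    then show "g q = z0" unfolding g_def z0_def refined_index_def I_def
      by (intro ext) auto
  next
    assume gq: "g q = z0"
    show "\<sigma> q \<inter> M = {}"
    proof (rule ccontr)
      assume "\<sigma> q \<inter> M \<noteq> {}"
      then obtain e where e: "e \<in> \<sigma> q" "e \<in> M" by auto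
      then have "e \<in> \<Union> (set K)" using un Msub by auto
      then obtain i where i: "i < length K" "e \<in> K!i" by (metis UnionE in_set_conv_nth)
      have "g q i = 0" using gq i unfolding z0_def I_def by simp
      then have "card (\<sigma> q \<inter> M \<inter> (K!i \<inter> M)) = 0" using gi i by simp
      moreover have "finite (\<sigma> q \<inter> M \<inter> (K!i \<inter> M))" using finM by auto
      ultimately show False using e i by auto
    qed
  qed
  have "is_unique_sink K \<sigma> M p"
    unfolding is_unique_sink_def is_sink_def
  proof (intro conjI allI impI)
    show "p \<in> vertices K M" using p V_def by simp
    show "\<sigma> p \<inter> M = {}" using sinkchar p by simp
    fix q assume "q \<in> vertices K M \<and> \<sigma> q \<inter> M = {}"
    then show "q = p" using sinkchar p ginj V_def by (metis inj_onD)
  qed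
  then show ?thesis by blast
qed

lemma sub_of_vert:
  assumes disj: "\<forall>i<length K. \<forall>j<length K. i\<noteq>j \<longrightarrow> K!i \<inter> K!j = {}"
    and un: "\<Union> (set K) = {1..n}"
    and sg: "is_subgrid n K M"
    and e: "e \<in> M"
  shows "\<exists>p\<in>vertices K M. e \<in> p"
proof -
  have "e \<in> \<Union> (set K)" using un sg e unfolding is_subgrid_def by blast
  then obtain k where k: "k \<in> set K" "e \<in> k" by blast
  then obtain j where j0: "j < length K" "K!j = k" by (auto simp: in_set_conv_nth)
  then have j: "j < length K" "e \<in> K!j" using k by auto
  define c where "c i = (SOME a. a \<in> M \<inter> K!i)" for i
  have c: "\<forall>i<length K. c i \<in> M \<inter> K!i"
  proof (intro allI impI)
    fix i assume "i < length K"
    then have "M \<inter> K!i \<noteq> {}" using sg unfolding is_subgrid_def by auto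
    then obtain a where "a \<in> M \<inter> K!i" by blast
    then show "c i \<in> M \<inter> K!i" unfolding c_def by (rule someI)
  qed
  define f where "f = c(j := e)"
  have "\<forall>i<length K. f i \<in> M \<inter> K!i"
  proof (intro allI impI)
    fix i assume i: "i < length K"
    show "f i \<in> M \<inter> K!i"
    proof (cases "i = j")
      case True
      then show ?thesis using e j(2) unfolding f_def by simp
    next
      case False
      then show ?thesis using c i unfolding f_def by simp
    qed
  qed
  then have "f ` {..<length K} \<in> vertices K M" by (rule vert_of_choice[OF disj])
  moreover have "e \<in> f ` {..<length K}"
  proof -
    have "f j = e" unfolding f_def by simp
    then show ?thesis using j(1) by (intro rev_image_eqI[of j]) auto
  qed
  ultimately show ?thesis by (rule rev_bexI)
qed

theorem lemma6p3p5:
  fixes n d :: nat and K :: "nat set list" and \<sigma> :: "nat set \<Rightarrow> nat set"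
    and M1 M2 M3 :: "nat set" and x y :: "nat set"
  assumes "is_grid n d K"
    and "is_outmap n K \<sigma>"
    and "\<forall>p\<in>vertices K {1..n}. \<sigma> p \<inter> p = {}"
    and "is_subgrid n K M1" and "is_subgrid n K M2" and "is_subgrid n K M3"
    and "vertices K M1 \<inter> vertices K M2 = {}"
    and "vertices K M1 \<union> vertices K M2 = vertices K M3"
    and "is_unique_sink K \<sigma> M1 x"
    and "is_unique_sink K \<sigma> M2 y"
  shows "is_unique_sink K \<sigma> M3 x \<or> is_unique_sink K \<sigma> M3 y
         \<or> (\<not> is_USO n K \<sigma> \<and> (GUV1 n K \<sigma> \<or> GUV2 n K \<sigma>))"
proof -
  have len: "length K = d" using assms(1) unfolding is_grid_def by blast
  have disj: "\<forall>i<length K. \<forall>j<length K. i\<noteq>j \<longrightarrow> K!i \<inter> K!j = {}"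
    using assms(1) len unfolding is_grid_def by blast
  have un: "\<Union> (set K) = {1..n}" using assms(1) unfolding is_grid_def by blast
  have sub: "M \<subseteq> M3" if sgM: "is_subgrid n K M" and vM: "vertices K M \<subseteq> vertices K M3" for M
  proof
    fix e assume "e \<in> M"
    then obtain p where "p \<in> vertices K M" "e \<in> p" using sub_of_vert[OF disj un sgM] by blast
    then have "p \<in> vertices K M3" "e \<in> p" using vM by auto
    then show "e \<in> M3" unfolding vertices_def by blast
  qed
  have s1: "M1 \<subseteq> M3" by (rule sub[OF assms(4)]) (use assms(8) in blast)
  have s2: "M2 \<subseteq> M3" by (rule sub[OF assms(5)]) (use assms(8) in blast)
  show ?thesis
  proof (cases "\<exists>z. is_unique_sink K \<sigma> M3 z")
    case True
    then obtain z where z: "is_unique_sink K \<sigma> M3 z" by blast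
    then have zv: "z \<in> vertices K M3" and zs: "\<sigma> z \<inter> M3 = {}"
      unfolding is_unique_sink_def is_sink_def by auto
    show ?thesis
    proof (cases "z \<in> vertices K M1")
      case True
      then have "is_sink K \<sigma> M1 z" using zs s1 unfolding is_sink_def by auto
      then have "z = x" using assms(9) unfolding is_unique_sink_def by auto
      then show ?thesis using z by simp
    next
      case False
      then have "z \<in> vertices K M2" using zv assms(8) by auto
      then have "is_sink K \<sigma> M2 z" using zs s2 unfolding is_sink_def by auto
      then have "z = y" using assms(10) unfolding is_unique_sink_def by auto
      then show ?thesis using z by simp
    qed
  next
    case False
    have nu: "\<not> is_USO n K \<sigma>"
    proof
      assume "is_USO n K \<sigma>"
      then have "\<exists>!p. is_sink K \<sigma> M3 p" using assms(6) unfolding is_USO_def by auto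
      then have "\<exists>z. is_unique_sink K \<sigma> M3 z" unfolding is_unique_sink_def by auto
      then show False using False by simp
    qed
    have "\<not> inj_on (refined_index K \<sigma> M3) (vertices K M3)"
      using key[OF len disj un assms(6) assms(3)] False by blast
    then obtain p q where "p \<in> vertices K M3" "q \<in> vertices K M3" "p \<noteq> q"
      "refined_index K \<sigma> M3 p = refined_index K \<sigma> M3 q" unfolding inj_on_def by blast
    then have "GUV2 n K \<sigma>" using assms(6) unfolding GUV2_def by blast
    then show ?thesis using nu by simp
  qed
qed

end
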